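(* Let $n\ge 2$, let $(A,+)$ be a non-trivial finite Abelian group and let $w$ be an $A$-arc-labelling of $\overleftrightarrow{K}_n$. Then there exists an $A$-arc-labelling $w'$ of $\overleftrightarrow{K}_n$ which is switching-equivalent to $w$ such that at least one of the following holds: (1) there exist a vertex set $V\subseteq V(\overleftrightarrow{K}_n)$ with $|V|\ge n-4|A|$ and a proper subgroup $B<A$ such that $w'(x,y)\in B$ for every arc $(x,y)$ of the induced subdigraph $\overleftrightarrow{K}_n[V]$; (2) there exist vertices $u,v\in V(\overleftrightarrow{K}_n)$ such that $w'$ is $A$-complete at $u,v$.
   Context: $\overleftrightarrow{K}_n$ denotes the complete digraph on $n$ vertices whose arc set consists of all ordered pairs of distinct vertices. An $A$-arc-labelling of $\overleftrightarrow{K}_n$ is a function $w$ from its arc set to $A$. The labelling $w$ is $A$-complete at vertices $u,v$ if for every $a\in A$ there is a directed path $P_a$ from $u$ to $v$ with $\sum_{(x,y)\in P_a} w(x,y)=a$. For a vertex $v$ and $c\in A$, the switching by $c$ at $v$ transforms $w$ into $w'$ with $w'(x,y)=w(x,y)$ if $x,y\ne v$, $w'(x,y)=w(x,y)+c$ if $x=v$, and $w'(x,y)=w(x,y)-c$ if $y=v$. Two $A$-arc-labellings are switching-equivalent if one can be obtained from the other by a finite sequence of switchings. *)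

theory Defs
  imports Main
begin

text \<open>An A-arc-labelling is a function w :: nat \<Rightarrow> nat \<Rightarrow> 'a whose values
  on arcs are relevant.\<close>

definition is_arc :: "nat \<Rightarrow> nat \<Rightarrow> nat \<Rightarrow> bool" where
  "is_arc n x y \<longleftrightarrow> x < n \<and> y < n \<and> x \<noteq> y"

definition switch :: "nat \<Rightarrow> 'a::ab_group_add \<Rightarrow> (nat \<Rightarrow> nat \<Rightarrow> 'a) \<Rightarrow> (nat \<Rightarrow> nat \<Rightarrow> 'a)" where
  "switch v c w = (\<lambda>x y. if x = v \<and> y \<noteq> v then w x y + c
                          else if y = v \<and> x \<noteq> v then w x y - c
                          else w x y)"

inductive switch_reach :: "nat \<Rightarrow> (nat \<Rightarrow> nat \<Rightarrow> 'a::ab_group_add) \<Rightarrow> (nat \<Rightarrow> nat \<Rightarrow> 'a) \<Rightarrow> bool"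
  for n where
  refl: "switch_reach n w w"
| step: "switch_reach n w w' \<Longrightarrow> v < n \<Longrightarrow> switch_reach n w (switch v c w')"

definition switching_equiv :: "nat \<Rightarrow> (nat \<Rightarrow> nat \<Rightarrow> 'a::ab_group_add) \<Rightarrow> (nat \<Rightarrow> nat \<Rightarrow> 'a) \<Rightarrow> bool" where
  "switching_equiv n w w' \<longleftrightarrow>
     (\<exists>w''. switch_reach n w w'' \<and> (\<forall>x y. is_arc n x y \<longrightarrow> w'' x y = w' x y))"

definition dipath :: "nat \<Rightarrow> nat list \<Rightarrow> nat \<Rightarrow> nat \<Rightarrow> bool" where
  "dipath n xs u v \<longleftrightarrow> xs \<noteq> [] \<and> hd xs = u \<and> last xs = v \<and> distinct xs \<and> set xs \<subseteq> {..<n}"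

definition path_weight :: "(nat \<Rightarrow> nat \<Rightarrow> 'a::ab_group_add) \<Rightarrow> nat list \<Rightarrow> 'a" where
  "path_weight w xs = sum_list (map (\<lambda>(x, y). w x y) (zip xs (tl xs)))"

definition A_complete :: "nat \<Rightarrow> (nat \<Rightarrow> nat \<Rightarrow> 'a::ab_group_add) \<Rightarrow> nat \<Rightarrow> nat \<Rightarrow> bool" where
  "A_complete n w u v \<longleftrightarrow> (\<forall>a::'a. \<exists>xs. dipath n xs u v \<and> path_weight w xs = a)"

definition add_subgroup :: "'a::ab_group_add set \<Rightarrow> bool" where
  "add_subgroup B \<longleftrightarrow> 0 \<in> B \<and> (\<forall>x\<in>B. \<forall>y\<in>B. x + y \<in> B) \<and> (\<forall>x\<in>B. - x \<in> B)"

end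

theory Submission imports Defs begin

lemma pw_snoc: "xs \<noteq> [] \<Longrightarrow> path_weight w (xs @ [y]) = path_weight w xs + w (last xs) y"
proof (induction xs rule: induct_list012)
  case (3 a b rest)
  then show ?case by (simp add: path_weight_def add.assoc)
qed (auto simp: path_weight_def)

lemma switch_pot:
  fixes w :: "nat \<Rightarrow> nat \<Rightarrow> 'a::ab_group_add"
  shows "switching_equiv n w (\<lambda>x y. w x y + f x - f y)"
proof -
  define F where "F k x = (if x < k then f x else 0)" for k x
  define wk where "wk k = (\<lambda>x y. if x = y then w x y else w x y + F k x - F k y)" for k
  have "k \<le> n \<Longrightarrow> switch_reach n w (wk k)" for k
  proof (induction k)
    case 0
    have "wk 0 = w" by (auto simp: wk_def F_def fun_eq_iff)
    then show ?case using switch_reach.refl by metis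
  next
    case (Suc k)
    have "switch_reach n w (switch k (f k) (wk k))"
      using Suc by (intro switch_reach.step) auto
    moreover have "switch k (f k) (wk k) = wk (Suc k)"
      by (auto simp: fun_eq_iff switch_def wk_def F_def algebra_simps)
    ultimately show ?case by simp
  qed
  then have "switch_reach n w (wk n)" by simp
  then show ?thesis unfolding switching_equiv_def
    by (intro exI[of _ "wk n"]) (auto simp: is_arc_def wk_def F_def)
qed

lemma card_grow:
  fixes W :: "'a::{finite,ab_group_add} set"
  assumes "(\<lambda>s. s + d) ` W \<noteq> W"
  shows "card W < card ((\<lambda>s. s + a) ` W \<union> (\<lambda>s. s + (a + d)) ` W)"
proof (rule ccontr)
  let ?T1 = "(\<lambda>s. s + a) ` W" and ?T2 = "(\<lambda>s. s + (a + d)) ` W"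
  assume nt: "\<not> card W < card (?T1 \<union> ?T2)"
  have c1: "card ?T1 = card W" by (rule card_image) (auto simp: inj_on_def)
  have c2: "card ?T2 = card W" by (rule card_image) (auto simp: inj_on_def)
  have "card (?T1 \<union> ?T2) = card ?T1" using nt c1
    by (metis card_mono finite sup_ge1 le_antisym not_less)
  then have "?T1 \<union> ?T2 = ?T1"
    by (metis card_subset_eq finite sup_ge1)
  then have "?T2 \<subseteq> ?T1" by blast
  then have "?T2 = ?T1" using c1 c2 by (metis card_subset_eq finite)
  then have "(\<lambda>s. s - a) ` ?T2 = (\<lambda>s. s - a) ` ?T1" by simp
  moreover have "(\<lambda>s. s - a) ` ?T2 = (\<lambda>s. s + d) ` W"
    by (auto simp: image_image algebra_simps)
  moreover have "(\<lambda>s. s - a) ` ?T1 = W"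
    by (auto simp: image_image)
  ultimately show False using assms by simp
qed

definition stab :: "'a::ab_group_add set \<Rightarrow> 'a set" where
  "stab W = {h. (\<lambda>s. s + h) ` W = W}"

lemma stab_subgroup:
  fixes W :: "'a::{finite,ab_group_add} set"
  shows "add_subgroup (stab W)"
  unfolding add_subgroup_def stab_def
proof (intro conjI ballI; simp)
  fix x y assume x: "(\<lambda>s. s + x) ` W = W" and y: "(\<lambda>s. s + y) ` W = W"
  have "(\<lambda>s. s + (x + y)) ` W = (\<lambda>s. s + y) ` ((\<lambda>s. s + x) ` W)"
    by (simp add: image_image add.assoc)
  then show "(\<lambda>s. s + (x + y)) ` W = W" using x y by simp
next
  fix x assume x: "(\<lambda>s. s + x) ` W = W"
  have "(\<lambda>s. s - x) ` ((\<lambda>s. s + x) ` W) = W" by (simp add: image_image)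
  then show "(\<lambda>s. s - x) ` W = W" using x by simp
qed

lemma stab_proper:
  fixes W :: "'a::{finite,ab_group_add} set"
  assumes "W \<noteq> {}" "W \<noteq> UNIV"
  shows "stab W \<noteq> UNIV"
proof
  assume h: "stab W = UNIV"
  obtain s0 where s0: "s0 \<in> W" using assms by auto
  have "a \<in> W" for a
  proof -
    have "(\<lambda>s. s + (a - s0)) ` W = W" using h by (auto simp: stab_def)
    then have "s0 + (a - s0) \<in> W" using s0 by blast
    then show ?thesis by simp
  qed
  then show False using assms by auto
qed

definition inv :: "nat \<Rightarrow> (nat \<Rightarrow> nat \<Rightarrow> 'a::ab_group_add) \<Rightarrow> nat list set \<Rightarrow> nat set \<Rightarrow> nat \<Rightarrow> nat \<Rightarrow> bool" where
  "inv n w P U u p \<longleftrightarrow> P \<noteq> {} \<and> (\<forall>xs\<in>P. dipath n xs u p \<and> set xs \<subseteq> U) \<and> U \<subseteq> {..<n}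
     \<and> card U \<le> 2 * card (path_weight w ` P)"

theorem lemma5:
  fixes n :: nat and w :: "nat \<Rightarrow> nat \<Rightarrow> 'a::{finite, ab_group_add}"
  assumes "n \<ge> 2" and "card (UNIV :: 'a set) \<ge> 2"
  shows "\<exists>w'. switching_equiv n w w' \<and>
           ((\<exists>V B. V \<subseteq> {..<n} \<and> int (card V) \<ge> int n - 4 * int (card (UNIV :: 'a set)) \<and>
                   add_subgroup B \<and> B \<noteq> (UNIV :: 'a set) \<and>
                   (\<forall>x\<in>V. \<forall>y\<in>V. x \<noteq> y \<longrightarrow> w' x y \<in> B))
            \<or> (\<exists>u v. u < n \<and> v < n \<and> A_complete n w' u v))"
proof (rule ccontr)
  let ?k = "card (UNIV :: 'a set)"
  assume neg: "\<not> ?thesis"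
  have no2: "\<not> A_complete n w u v" if "u < n" "v < n" for u v
  proof
    assume "A_complete n w u v"
    moreover have "switching_equiv n w w" unfolding switching_equiv_def
      using switch_reach.refl by blast
    ultimately show False using neg that by blast
  qed
  have no1: "\<not> (\<forall>x\<in>V. \<forall>y\<in>V. x \<noteq> y \<longrightarrow> w x y + f x - f y \<in> B)"
    if "V \<subseteq> {..<n}" "int (card V) \<ge> int n - 4 * int ?k" "add_subgroup B" "B \<noteq> UNIV" for V B f
    using neg that switch_pot[of n w f] by blast
  have step: "\<exists>P' U' p'. inv n w P' U' u p' \<and> card (path_weight w ` P) < card (path_weight w ` P')"
    if I: "inv n w P U u p" for P U u p
  proof -
    let ?W = "path_weight w ` P"
    have Pne: "P \<noteq> {}" and Pd: "\<And>xs. xs \<in> P \<Longrightarrow> dipath n xs u p \<and> set xs \<subseteq> U"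
      and Un: "U \<subseteq> {..<n}" and cU: "card U \<le> 2 * card ?W" using I by (auto simp: inv_def)
    obtain xs0 where xs0: "xs0 \<in> P" using Pne by auto
    have un: "u < n" "p < n" using Pd[OF xs0] Un unfolding dipath_def
      by (metis hd_in_set last_in_set lessThan_iff subsetD)+
    have "?W \<noteq> UNIV"
    proof
      assume "?W = UNIV"
      then have "A_complete n w u p" unfolding A_complete_def using Pd
        by (metis UNIV_I imageE)
      then show False using no2 un by blast
    qed
    then have Bp: "stab ?W \<noteq> UNIV" using stab_proper[of ?W] Pne by simp
    define V where "V = {..<n} - U"
    have fU: "finite U" using finite_subset[OF Un] by simp
    have cV: "card V = n - card U" unfolding V_def using Un fU
      by (simp add: card_Diff_subset)
    have "card ?W \<le> ?k" by (simp add: card_mono)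
    moreover have "card U \<le> n" using card_mono[OF _ Un] by simp
    ultimately have cVb: "int (card V) \<ge> int n - 4 * int ?k" using cV cU by linarith
    obtain x y where xy: "x \<in> V" "y \<in> V" "x \<noteq> y"
      and nb: "w x y + w p x - w p y \<notin> stab ?W"
    proof -
      have "V \<subseteq> {..<n}" unfolding V_def by blast
      from no1[OF this cVb stab_subgroup[of ?W] Bp, of "w p"]
      have "\<exists>x\<in>V. \<exists>y\<in>V. x \<noteq> y \<and> w x y + w p x - w p y \<notin> stab ?W" by blast
      then show ?thesis using that by blast
    qed
    define d where "d = w p x + w x y - w p y"
    have "w x y + w p x - w p y = d" unfolding d_def by (simp add: algebra_simps)
    then have dn: "(\<lambda>s. s + d) ` ?W \<noteq> ?W" using nb unfolding stab_def by simp
    define P' where "P' = (\<lambda>xs. xs @ [y]) ` P \<union> (\<lambda>xs. xs @ [x, y]) ` P"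
    define U' where "U' = U \<union> {x, y}"
    have lastp: "xs \<in> P \<Longrightarrow> xs \<noteq> [] \<and> last xs = p" for xs using Pd by (auto simp: dipath_def)
    have W': "path_weight w ` P' = (\<lambda>s. s + w p y) ` ?W \<union> (\<lambda>s. s + (w p y + d)) ` ?W"
    proof -
      have a: "path_weight w (xs @ [y]) = path_weight w xs + w p y" if "xs \<in> P" for xs
        using pw_snoc[of xs w y] lastp[OF that] by simp
      have b: "path_weight w (xs @ [x, y]) = path_weight w xs + (w p y + d)" if "xs \<in> P" for xs
      proof -
        have "path_weight w (xs @ [x, y]) = path_weight w ((xs @ [x]) @ [y])" by simp
        also have "\<dots> = path_weight w xs + w p x + w x y"
          using pw_snoc[of "xs @ [x]" w y] pw_snoc[of xs w x] lastp[OF that] by simp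
        finally show ?thesis by (simp add: d_def algebra_simps)
      qed
      have "path_weight w ` P' = (\<lambda>xs. path_weight w xs + w p y) ` P \<union> (\<lambda>xs. path_weight w xs + (w p y + d)) ` P"
        unfolding P'_def image_Un image_image
        by (intro arg_cong2[where f="(\<union>)"] image_cong) (auto simp: a b)
      then show ?thesis by (simp add: image_image)
    qed
    have xyU: "x \<notin> U" "y \<notin> U" "x < n" "y < n" using xy V_def by auto
    have inv': "inv n w P' U' u y"
      unfolding inv_def
    proof (intro conjI)
      show "P' \<noteq> {}" using Pne P'_def by auto
      show "U' \<subseteq> {..<n}" using Un xyU U'_def by auto
      show "\<forall>zs\<in>P'. dipath n zs u y \<and> set zs \<subseteq> U'"
      proof
        fix zs assume "zs \<in> P'"
        then obtain xs where xs: "xs \<in> P" "zs = xs @ [y] \<or> zs = xs @ [x, y]"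
          unfolding P'_def by blast
        have D: "xs \<noteq> []" "hd xs = u" "distinct xs" "set xs \<subseteq> {..<n}" "set xs \<subseteq> U"
          using Pd[OF xs(1)] unfolding dipath_def by auto
        have "x \<notin> set xs" "y \<notin> set xs" using D(5) xyU by auto
        then show "dipath n zs u y \<and> set zs \<subseteq> U'"
          using xs(2) D xyU xy(3) unfolding dipath_def U'_def by auto
      qed
      have "card U' = card U + 2" unfolding U'_def using xyU xy(3) fU by simp
      moreover have "card ?W < card (path_weight w ` P')"
        unfolding W' by (rule card_grow[OF dn])
      ultimately show "card U' \<le> 2 * card (path_weight w ` P')" using cU by linarith
    qed
    show ?thesis using inv' card_grow[OF dn, of "w p y"] unfolding W'[symmetric] by blast
  qed
  have "\<exists>P U u p. inv n w P U u p \<and> card (path_weight w ` P) \<ge> m" for m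
  proof (induction m)
    case 0
    have "inv n w {[0]} {0} 0 0" using assms(1)
      by (auto simp: inv_def dipath_def)
    then show ?case by blast
  next
    case (Suc m)
    then obtain P U u p where "inv n w P U u p" "card (path_weight w ` P) \<ge> m" by blast
    then obtain P' U' p' where "inv n w P' U' u p'" "card (path_weight w ` P) < card (path_weight w ` P')"
      using step by blast
    then show ?case using \<open>card (path_weight w ` P) \<ge> m\<close> by (intro exI[of _ P'] exI[of _ U'] exI[of _ u] exI[of _ p']) simp
  qed
  then obtain P U u p where "card (path_weight w ` P) \<ge> Suc ?k" by blast
  moreover have "card (path_weight w ` P) \<le> ?k" by (simp add: card_mono)
  ultimately show False by linarith
qed

end
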